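(* There exist a finite rank operator $S$ on $\ell_2$ (complex) with $\|I-S\|=1$, an element $\phi\in M_0(B_{\ell_2})$ of the fiber over $0$ of the spectrum of $H^\infty(B_{\ell_2})$, and $f\in H^\infty(B_{\ell_2})$ such that, with $P=I-S$, $\hat f(\phi)\neq\widehat{f\circ P}(\phi)$.
   Context: $H^\infty(B_{\ell_2})$ is the uniform algebra of all bounded holomorphic functions on the open unit ball $B_{\ell_2}$ of complex $\ell_2$, with the supremum norm. Its spectrum consists of the nonzero multiplicative linear functionals on it; the fiber over $0$, $M_0(B_{\ell_2})$, is the set of those $\phi$ in the spectrum with $\phi(x^* )=0$ for every continuous linear functional $x^*$ on $\ell_2$. $\hat f(\phi)=\phi(f)$. *)

theory Defs
  imports Complex_Main "HOL-Library.Function_Algebras"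
begin

definition l2 :: "(nat \<Rightarrow> complex) set" where
  "l2 = {x. summable (\<lambda>n. (cmod (x n))\<^sup>2)}"

definition l2norm :: "(nat \<Rightarrow> complex) \<Rightarrow> real" where
  "l2norm x = sqrt (\<Sum>n. (cmod (x n))\<^sup>2)"

definition l2_scale :: "complex \<Rightarrow> (nat \<Rightarrow> complex) \<Rightarrow> (nat \<Rightarrow> complex)" where
  "l2_scale c x = (\<lambda>n. c * x n)"

definition Bl2 :: "(nat \<Rightarrow> complex) set" where
  "Bl2 = {x \<in> l2. l2norm x < 1}"

definition l2_dual :: "((nat \<Rightarrow> complex) \<Rightarrow> complex) set" where
  "l2_dual = {L. (\<forall>x\<in>l2. \<forall>y\<in>l2. L (x + y) = L x + L y)
              \<and> (\<forall>c. \<forall>x\<in>l2. L (l2_scale c x) = c * L x)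
              \<and> (\<exists>K. \<forall>x\<in>l2. cmod (L x) \<le> K * l2norm x)}"

definition holomorphic_Bl2 :: "((nat \<Rightarrow> complex) \<Rightarrow> complex) \<Rightarrow> bool" where
  "holomorphic_Bl2 f \<longleftrightarrow>
     (\<forall>x\<in>Bl2. \<exists>L\<in>l2_dual. \<forall>\<epsilon>>0. \<exists>\<delta>>0. \<forall>h\<in>l2.
        l2norm h < \<delta> \<longrightarrow> x + h \<in> Bl2 \<longrightarrow>
        cmod (f (x + h) - f x - L h) \<le> \<epsilon> * l2norm h)"

text \<open>Functions on the ball are represented by functions vanishing outside it.\<close>
definition restrB :: "((nat \<Rightarrow> complex) \<Rightarrow> complex) \<Rightarrow> ((nat \<Rightarrow> complex) \<Rightarrow> complex)" where
  "restrB g = (\<lambda>x. if x \<in> Bl2 then g x else 0)"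

definition Hinf :: "((nat \<Rightarrow> complex) \<Rightarrow> complex) set" where
  "Hinf = {f. holomorphic_Bl2 f \<and> (\<exists>M. \<forall>x\<in>Bl2. cmod (f x) \<le> M)
             \<and> (\<forall>x. x \<notin> Bl2 \<longrightarrow> f x = 0)}"

definition Hinf_spectrum :: "(((nat \<Rightarrow> complex) \<Rightarrow> complex) \<Rightarrow> complex) set" where
  "Hinf_spectrum = {\<phi>.
      (\<forall>f\<in>Hinf. \<forall>g\<in>Hinf. \<phi> (\<lambda>x. f x + g x) = \<phi> f + \<phi> g)
    \<and> (\<forall>c. \<forall>f\<in>Hinf. \<phi> (\<lambda>x. c * f x) = c * \<phi> f)
    \<and> (\<forall>f\<in>Hinf. \<forall>g\<in>Hinf. \<phi> (\<lambda>x. f x * g x) = \<phi> f * \<phi> g)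
    \<and> (\<exists>f\<in>Hinf. \<phi> f \<noteq> 0)}"

definition fiber0 :: "(((nat \<Rightarrow> complex) \<Rightarrow> complex) \<Rightarrow> complex) set" where
  "fiber0 = {\<phi> \<in> Hinf_spectrum. \<forall>L\<in>l2_dual. \<phi> (restrB L) = 0}"

definition bounded_op_l2 :: "((nat \<Rightarrow> complex) \<Rightarrow> (nat \<Rightarrow> complex)) \<Rightarrow> bool" where
  "bounded_op_l2 T \<longleftrightarrow> (\<forall>x\<in>l2. T x \<in> l2)
     \<and> (\<forall>x\<in>l2. \<forall>y\<in>l2. T (x + y) = T x + T y)
     \<and> (\<forall>c. \<forall>x\<in>l2. T (l2_scale c x) = l2_scale c (T x))
     \<and> (\<exists>K. \<forall>x\<in>l2. l2norm (T x) \<le> K * l2norm x)"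

definition finite_rank_l2 :: "((nat \<Rightarrow> complex) \<Rightarrow> (nat \<Rightarrow> complex)) \<Rightarrow> bool" where
  "finite_rank_l2 T \<longleftrightarrow> bounded_op_l2 T \<and>
     (\<exists>n::nat. \<exists>v. (\<forall>i<n. v i \<in> l2) \<and>
        (\<forall>x\<in>l2. \<exists>c. T x = (\<Sum>i<n. l2_scale (c i) (v i))))"

definition opnorm_l2 :: "((nat \<Rightarrow> complex) \<Rightarrow> (nat \<Rightarrow> complex)) \<Rightarrow> real" where
  "opnorm_l2 T = Sup {l2norm (T x) | x. x \<in> l2 \<and> l2norm x \<le> 1}"

end

theory Submission
  imports Defs "HOL-Analysis.Analysis"
begin

definition ultra :: "'a filter \<Rightarrow> bool" where
  "ultra F \<longleftrightarrow> F \<noteq> bot \<and> (\<forall>P. eventually P F \<or> eventually (\<lambda>x. \<not> P x) F)"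

lemma max_filter_ultra:
  assumes "F \<noteq> bot"
  assumes max: "\<And>G. G \<noteq> bot \<Longrightarrow> G \<le> F \<Longrightarrow> F = G"
  shows "ultra F"
  unfolding ultra_def
proof (intro conjI allI assms(1))
  show "eventually P F \<or> (\<forall>\<^sub>Fx in F. \<not> P x)" for P
  proof (rule disjCI)
    assume "\<not> (\<forall>\<^sub>Fx in F. \<not> P x)"
    then have "inf F (principal {x. P x}) \<noteq> bot"
      by (simp add: trivial_limit_def eventually_inf_principal not_eventually)
    then have F: "F = inf F (principal {x. P x})"
      by (rule max) simp
    show "eventually P F"
      by (subst F) (simp add: eventually_inf_principal)
  qed
qed

lemma ex_ultra:
  fixes F :: "'a filter"
  assumes F: "F \<noteq> bot"
  shows "\<exists>U\<le>F. ultra U"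
proof -
  let ?X = "{G. G \<noteq> bot \<and> G \<le> F}"
  let ?R = "{(b, a). a \<noteq> bot \<and> a \<le> b \<and> b \<le> F}"
  have bot_notin_R: "c \<in> Chains ?R \<Longrightarrow> bot \<notin> c" for c
    by (auto simp: Chains_def)
  have [simp]: "Field ?R = ?X"
    by (auto simp: Field_def bot_unique)
  have "\<exists>m\<in>Field ?R. \<forall>a\<in>Field ?R. (m, a) \<in> ?R \<longrightarrow> a = m" (is "\<exists>m\<in>?A. ?B m")
  proof (rule Zorns_po_lemma)
    show "Partial_order ?R"
      by (auto simp: partial_order_on_def preorder_on_def
          antisym_def refl_on_def trans_def Field_def bot_unique)
    show "\<exists>u\<in>Field ?R. \<forall>a\<in>C. (a, u) \<in> ?R" if C: "C \<in> Chains ?R" for C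
    proof (simp, intro exI conjI ballI)
      have Inf_C: "Inf C \<noteq> bot" "Inf C \<le> F" if "C \<noteq> {}"
      proof -
        from C that have "Inf C = bot \<longleftrightarrow> (\<exists>x\<in>C. x = bot)"
          unfolding trivial_limit_def by (intro eventually_Inf_base) (auto simp: Chains_def)
        with C show "Inf C \<noteq> bot"
          by (simp add: bot_notin_R)
        from that obtain x where "x \<in> C" by auto
        with C show "Inf C \<le> F"
          by (auto intro!: Inf_lower2[of x] simp: Chains_def)
      qed
      then have [simp]: "inf F (Inf C) = (if C = {} then F else Inf C)"
        using C by (auto simp add: inf_absorb2)
      from C show "inf F (Inf C) \<noteq> bot"
        by (simp add: F Inf_C)
      from C show "inf F (Inf C) \<le> F"
        by (simp add: Chains_def Inf_C F)
      with C show "inf F (Inf C) \<le> x" "x \<le> F" if "x \<in> C" for x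
        using that  by (auto intro: Inf_lower simp: Chains_def)
    qed
  qed
  then obtain U where U: "U \<in> ?A" "?B U" ..
  show ?thesis
  proof
    from U show "U \<le> F \<and> ultra U"
      by (auto intro!: max_filter_ultra)
  qed
qed

lemma ultra_lim:
  fixes g :: "'a \<Rightarrow> complex"
  assumes U: "ultra U" and b: "\<And>n. cmod (g n) \<le> M"
  shows "\<exists>l. (g \<longlongrightarrow> l) U"
proof -
  let ?G = "filtermap g U"
  have G: "?G \<noteq> bot" using U by (simp add: ultra_def filtermap_bot_iff)
  have "eventually (\<lambda>x. x \<in> cball 0 M) ?G"
    using b by (simp add: eventually_filtermap)
  then obtain l where "inf (nhds l) ?G \<noteq> bot"
    using compact_filter[THEN iffD1, OF compact_cball] G by blast
  then have *: "(g \<longlongrightarrow> l) U"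
    unfolding tendsto_def
  proof (intro allI impI)
    fix S assume ne: "inf (nhds l) ?G \<noteq> bot" and S: "open S" "l \<in> S"
    show "eventually (\<lambda>n. g n \<in> S) U"
    proof (rule ccontr)
      assume "\<not> eventually (\<lambda>n. g n \<in> S) U"
      then have "eventually (\<lambda>n. \<not> g n \<in> S) U" using U unfolding ultra_def by blast
      then have e1: "eventually (\<lambda>x. x \<notin> S) (inf (nhds l) ?G)"
        by (intro filter_leD[OF inf_le2]) (simp add: eventually_filtermap)
      have e2: "eventually (\<lambda>x. x \<in> S) (inf (nhds l) ?G)"
        by (intro filter_leD[OF inf_le1]) (simp add: eventually_nhds_in_open S)
      have "eventually (\<lambda>x. False) (inf (nhds l) ?G)"
        using eventually_conj[OF e1 e2] by (rule eventually_mono) simp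
      then show False using ne by (simp add: eventually_False)
    qed
  qed
  then show ?thesis by blast
qed

definition nrm2 :: "(nat \<Rightarrow> complex) \<Rightarrow> real" where
  "nrm2 x = (\<Sum>n. (cmod (x n))\<^sup>2)"

lemma l2D: "x \<in> l2 \<Longrightarrow> summable (\<lambda>n. (cmod (x n))\<^sup>2)" by (simp add: l2_def)

lemma nrm2_nonneg: "x \<in> l2 \<Longrightarrow> 0 \<le> nrm2 x"
  unfolding nrm2_def by (metis l2D suminf_nonneg zero_le_power2)

lemma l2norm_sq: assumes "x \<in> l2" shows "(l2norm x)\<^sup>2 = nrm2 x"
proof -
  have "0 \<le> nrm2 x" by (rule nrm2_nonneg[OF assms])
  thus ?thesis unfolding l2norm_def nrm2_def by simp
qed

lemma l2norm_nonneg: "x \<in> l2 \<Longrightarrow> 0 \<le> l2norm x"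
  using nrm2_nonneg unfolding l2norm_def nrm2_def by simp

lemma finsupp_l2:
  assumes "finite A" "\<And>n. n \<notin> A \<Longrightarrow> x n = 0"
  shows "x \<in> l2" "nrm2 x = (\<Sum>n\<in>A. (cmod (x n))\<^sup>2)"
proof -
  have z: "\<And>n. n \<notin> A \<Longrightarrow> (cmod (x n))\<^sup>2 = 0" using assms(2) by simp
  show "x \<in> l2" unfolding l2_def using summable_finite[OF assms(1) z] by simp
  show "nrm2 x = (\<Sum>n\<in>A. (cmod (x n))\<^sup>2)" unfolding nrm2_def using suminf_finite[OF assms(1) z] .
qed

lemma coord_le: "x \<in> l2 \<Longrightarrow> (cmod (x k))\<^sup>2 \<le> nrm2 x"
  unfolding nrm2_def using sum_le_suminf[OF l2D, of x "{k}"] by simp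

lemma coord_le_norm: "x \<in> l2 \<Longrightarrow> cmod (x k) \<le> l2norm x"
  using coord_le[of x k] unfolding l2norm_def nrm2_def
  by (metis norm_ge_zero real_le_rsqrt)

lemma tail_summable: assumes "x \<in> l2" shows "summable (\<lambda>k. (cmod (x (Suc k)))\<^sup>2)"
  using summable_Suc_iff[of "\<lambda>n. (cmod (x n))\<^sup>2"] l2D[OF assms] by simp

lemma tail_eq: assumes "x \<in> l2" shows "(\<Sum>k. (cmod (x (Suc k)))\<^sup>2) = nrm2 x - (cmod (x 0))\<^sup>2"
  unfolding nrm2_def using suminf_split_head[OF l2D[OF assms]] by simp

definition qf :: "(nat \<Rightarrow> complex) \<Rightarrow> complex" where
  "qf x = (\<Sum>k. (x (Suc k))\<^sup>2)"

lemma qf_summable: "x \<in> l2 \<Longrightarrow> summable (\<lambda>k. (x (Suc k))\<^sup>2)"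
  by (rule summable_norm_cancel) (simp add: norm_power tail_summable)

lemma qf_bound: "x \<in> l2 \<Longrightarrow> cmod (qf x) \<le> nrm2 x - (cmod (x 0))\<^sup>2"
proof -
  assume x: "x \<in> l2"
  have "cmod (qf x) \<le> (\<Sum>k. cmod ((x (Suc k))\<^sup>2))"
    unfolding qf_def by (rule summable_norm) (simp add: norm_power tail_summable x)
  also have "\<dots> = nrm2 x - (cmod (x 0))\<^sup>2" using tail_eq[OF x] by (simp add: norm_power)
  finally show ?thesis .
qed

lemma qf_bound2: assumes "x \<in> l2" shows "cmod (qf x) \<le> (l2norm x)\<^sup>2"
proof -
  have "cmod (qf x) \<le> nrm2 x - (cmod (x 0))\<^sup>2" using qf_bound[OF assms] .
  moreover have "0 \<le> (cmod (x 0))\<^sup>2" by simp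
  ultimately show ?thesis using l2norm_sq[OF assms] by linarith
qed

definition bf :: "(nat \<Rightarrow> complex) \<Rightarrow> (nat \<Rightarrow> complex) \<Rightarrow> complex" where
  "bf x h = (\<Sum>k. x (Suc k) * h (Suc k))"

lemma amgm: fixes a b t :: real assumes "t > 0" shows "a * b \<le> (t * a\<^sup>2 + b\<^sup>2 / t) / 2"
proof -
  have "0 \<le> (t * a - b)\<^sup>2" by simp
  hence "2 * t * (a*b) \<le> t\<^sup>2 * a\<^sup>2 + b\<^sup>2" by (simp add: power2_eq_square algebra_simps)
  hence "a*b \<le> (t\<^sup>2 * a\<^sup>2 + b\<^sup>2) / (2*t)" using assms by (simp add: pos_le_divide_eq mult.commute mult.left_commute)
  moreover have "(t\<^sup>2 * a\<^sup>2 + b\<^sup>2) / (2*t) = (t * a\<^sup>2 + b\<^sup>2 / t) / 2" using assms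
    by (simp add: field_simps power2_eq_square)
  ultimately show ?thesis by simp
qed

lemma cross_summable:
  assumes x: "x \<in> l2" and h: "h \<in> l2"
  shows "summable (\<lambda>k. cmod (x (Suc k)) * cmod (h (Suc k)))"
proof (rule summable_comparison_test[OF _ summable_add[OF tail_summable[OF x] tail_summable[OF h]]])
  show "\<exists>N. \<forall>n\<ge>N. norm (cmod (x (Suc n)) * cmod (h (Suc n))) \<le> (cmod (x (Suc n)))\<^sup>2 + (cmod (h (Suc n)))\<^sup>2"
  proof (intro exI allI impI)
    fix n
    have "2 * (cmod (x (Suc n)) * cmod (h (Suc n))) \<le> ((cmod (x (Suc n)))\<^sup>2 + (cmod (h (Suc n)))\<^sup>2)"
      using amgm[of 1 "cmod (x (Suc n))" "cmod (h (Suc n))"] by simp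
    moreover have "0 \<le> (cmod (x (Suc n)))\<^sup>2" "0 \<le> (cmod (h (Suc n)))\<^sup>2"
      "0 \<le> cmod (x (Suc n)) * cmod (h (Suc n))" by simp_all
    moreover have "norm (cmod (x (Suc n)) * cmod (h (Suc n))) = cmod (x (Suc n)) * cmod (h (Suc n))"
      by (simp add: abs_mult)
    ultimately show "norm (cmod (x (Suc n)) * cmod (h (Suc n))) \<le> (cmod (x (Suc n)))\<^sup>2 + (cmod (h (Suc n)))\<^sup>2"
      by linarith
  qed
qed

lemma cross_bound:
  assumes x: "x \<in> l2" and h: "h \<in> l2" and n1: "nrm2 x \<le> 1"
  shows "(\<Sum>k. cmod (x (Suc k)) * cmod (h (Suc k))) \<le> l2norm h"
proof (cases "l2norm h = 0")
  case True
  hence "nrm2 h = 0" using l2norm_sq[OF h] by simp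
  hence "\<forall>n. (cmod (h n))\<^sup>2 = 0" unfolding nrm2_def using suminf_eq_zero_iff[OF l2D[OF h]] by simp
  hence "\<forall>n. h n = 0" by simp
  thus ?thesis by (simp add: l2norm_nonneg h)
next
  case False
  define t where "t = l2norm h"
  have t: "t > 0" using False l2norm_nonneg[OF h] unfolding t_def by linarith
  have "(\<Sum>k. cmod (x (Suc k)) * cmod (h (Suc k))) \<le>
        (\<Sum>k. (t * (cmod (x (Suc k)))\<^sup>2 + (cmod (h (Suc k)))\<^sup>2 / t) / 2)"
    apply (rule suminf_le[OF amgm[OF t] cross_summable[OF x h]])
    apply (intro summable_divide summable_add summable_mult tail_summable x h)
    done
  also have "\<dots> = (t * (\<Sum>k. (cmod (x (Suc k)))\<^sup>2) + (\<Sum>k. (cmod (h (Suc k)))\<^sup>2) / t) / 2"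
  proof -
    have s1: "summable (\<lambda>k. t * (cmod (x (Suc k)))\<^sup>2)" by (intro summable_mult tail_summable x)
    have s2: "summable (\<lambda>k. (cmod (h (Suc k)))\<^sup>2 / t)" by (intro summable_divide tail_summable h)
    have "(\<Sum>k. (t * (cmod (x (Suc k)))\<^sup>2 + (cmod (h (Suc k)))\<^sup>2 / t) / 2)
       = (\<Sum>k. t * (cmod (x (Suc k)))\<^sup>2 + (cmod (h (Suc k)))\<^sup>2 / t) / 2"
      by (rule suminf_divide) (rule summable_add[OF s1 s2])
    also have "(\<Sum>k. t * (cmod (x (Suc k)))\<^sup>2 + (cmod (h (Suc k)))\<^sup>2 / t)
       = (\<Sum>k. t * (cmod (x (Suc k)))\<^sup>2) + (\<Sum>k. (cmod (h (Suc k)))\<^sup>2 / t)"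
      by (rule suminf_add[OF s1 s2, symmetric])
    also have "(\<Sum>k. t * (cmod (x (Suc k)))\<^sup>2) = t * (\<Sum>k. (cmod (x (Suc k)))\<^sup>2)"
      by (rule suminf_mult) (rule tail_summable[OF x])
    also have "(\<Sum>k. (cmod (h (Suc k)))\<^sup>2 / t) = (\<Sum>k. (cmod (h (Suc k)))\<^sup>2) / t"
      by (rule suminf_divide) (rule tail_summable[OF h])
    finally show ?thesis .
  qed
  also have "\<dots> \<le> (t * 1 + t\<^sup>2 / t) / 2"
  proof -
    have "(\<Sum>k. (cmod (x (Suc k)))\<^sup>2) \<le> 1" using tail_eq[OF x] n1 zero_le_power2[of "cmod (x 0)"] by linarith
    moreover have "(\<Sum>k. (cmod (h (Suc k)))\<^sup>2) \<le> t\<^sup>2"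
      using tail_eq[OF h] l2norm_sq[OF h] zero_le_power2[of "cmod (h 0)"] unfolding t_def by linarith
    ultimately show ?thesis using t
      by (intro divide_right_mono add_mono mult_left_mono divide_right_mono) auto
  qed
  also have "\<dots> = t" using t by (simp add: power2_eq_square)
  finally show ?thesis unfolding t_def .
qed

lemma bf_summable: "x \<in> l2 \<Longrightarrow> h \<in> l2 \<Longrightarrow> summable (\<lambda>k. x (Suc k) * h (Suc k))"
  by (rule summable_norm_cancel) (simp add: norm_mult cross_summable)

lemma bf_bound:
  assumes "x \<in> l2" "h \<in> l2" "nrm2 x \<le> 1"
  shows "cmod (bf x h) \<le> l2norm h"
proof -
  have "cmod (bf x h) \<le> (\<Sum>k. cmod (x (Suc k) * h (Suc k)))"
    unfolding bf_def by (rule summable_norm) (simp add: norm_mult cross_summable assms)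
  also have "\<dots> \<le> l2norm h" using cross_bound[OF assms] by (simp add: norm_mult)
  finally show ?thesis .
qed

lemma l2_scale_in: assumes "x \<in> l2" shows "l2_scale c x \<in> l2"
proof -
  have e: "(\<lambda>n. (cmod (l2_scale c x n))\<^sup>2) = (\<lambda>n. (cmod c)\<^sup>2 * (cmod (x n))\<^sup>2)"
    by (simp add: l2_scale_def norm_mult power_mult_distrib)
  show ?thesis unfolding l2_def using summable_mult[OF l2D[OF assms], of "(cmod c)\<^sup>2"] e by simp
qed


lemma qf_add: assumes x: "x \<in> l2" and h: "h \<in> l2"
  shows "qf (\<lambda>n. x n + h n) = qf x + 2 * bf x h + qf h"
proof -
  have sx: "summable (\<lambda>k. (x (Suc k))\<^sup>2)" by (rule qf_summable[OF x])
  have sh: "summable (\<lambda>k. (h (Suc k))\<^sup>2)" by (rule qf_summable[OF h])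
  have sb: "summable (\<lambda>k. 2 * (x (Suc k) * h (Suc k)))" by (intro summable_mult bf_summable x h)
  have "qf (\<lambda>n. x n + h n) = (\<Sum>k. ((x (Suc k))\<^sup>2 + 2 * (x (Suc k) * h (Suc k))) + (h (Suc k))\<^sup>2)"
    unfolding qf_def by (intro arg_cong[where f=suminf] ext) (simp add: power2_sum)
  also have "\<dots> = (\<Sum>k. (x (Suc k))\<^sup>2 + 2 * (x (Suc k) * h (Suc k))) + qf h"
    unfolding qf_def by (rule suminf_add[symmetric]) (rule summable_add[OF sx sb], rule sh)
  also have "(\<Sum>k. (x (Suc k))\<^sup>2 + 2 * (x (Suc k) * h (Suc k))) = qf x + (\<Sum>k. 2 * (x (Suc k) * h (Suc k)))"
    unfolding qf_def by (rule suminf_add[OF sx sb, symmetric])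
  also have "(\<Sum>k. 2 * (x (Suc k) * h (Suc k))) = 2 * bf x h"
    unfolding bf_def by (rule suminf_mult) (rule bf_summable[OF x h])
  finally show ?thesis .
qed



lemma l2_add: "x \<in> l2 \<Longrightarrow> h \<in> l2 \<Longrightarrow> x + h \<in> l2"
proof -
  assume x: "x \<in> l2" and h: "h \<in> l2"
  have "summable (\<lambda>n. (cmod ((x + h) n))\<^sup>2)"
  proof (rule summable_comparison_test[OF _ summable_add[OF summable_mult[OF l2D[OF x]] summable_mult[OF l2D[OF h]]]])
    show "\<exists>N. \<forall>n\<ge>N. norm ((cmod ((x + h) n))\<^sup>2) \<le> 2 * (cmod (x n))\<^sup>2 + 2 * (cmod (h n))\<^sup>2"
    proof (intro exI allI impI)
      fix n
      have "cmod ((x + h) n) \<le> cmod (x n) + cmod (h n)" unfolding plus_fun_def by (rule norm_triangle_ineq)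
      hence "(cmod ((x + h) n))\<^sup>2 \<le> (cmod (x n) + cmod (h n))\<^sup>2" by (rule power_mono) simp
      also have "\<dots> \<le> 2 * (cmod (x n))\<^sup>2 + 2 * (cmod (h n))\<^sup>2"
      proof -
        have "0 \<le> (cmod (x n) - cmod (h n))\<^sup>2" by simp
        thus ?thesis unfolding power2_diff power2_sum by linarith
      qed
      finally show "norm ((cmod ((x + h) n))\<^sup>2) \<le> 2 * (cmod (x n))\<^sup>2 + 2 * (cmod (h n))\<^sup>2" by simp
    qed
  qed
  thus ?thesis by (simp add: l2_def)
qed

lemma core_ident:
  fixes a al be ga D :: complex
  assumes D: "D \<noteq> 0" and D': "D - be - ga \<noteq> 0"
  shows "(a+al)^2/(D-be-ga) - a^2/D - 2*a*al/D - a^2*be/D^2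
       = (al^2*D^2 + a^2*D*ga + 2*a*al*D*(be+ga) + a^2*be*(be+ga)) / ((D-be-ga)*D^2)"
proof -
  define E where "E = D - be - ga"
  have E: "E \<noteq> 0" using D' E_def by simp
  have ga: "ga = D - be - E" using E_def by simp
  show ?thesis unfolding E_def[symmetric] unfolding ga using D E
    by (simp add: field_simps power2_eq_square)
qed

lemma core:
  fixes a al be ga D :: complex and t m :: real
  assumes a: "cmod a \<le> 1" and m: "m > 0" "m \<le> cmod D" and D2: "cmod D \<le> 2"
    and al: "cmod al \<le> t" and be: "cmod be \<le> 2*t" and ga: "cmod ga \<le> t^2"
    and t: "0 \<le> t" "t \<le> 1" "t \<le> m/8"
  shows "cmod ((a+al)^2/(D-be-ga) - a^2/D - 2*a*al/D - a^2*be/D^2) \<le> 48*t^2/m^3"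
proof -
  have D: "D \<noteq> 0" using m by auto
  have t2: "t^2 \<le> t" using t by (simp add: power2_eq_square mult_left_le)
  have bg: "cmod (be+ga) \<le> 3*t" using norm_triangle_ineq[of be ga] be ga t2 by linarith
  have "cmod D - cmod (be+ga) \<le> cmod (D - be - ga)"
    using norm_triangle_ineq2[of D "be+ga"] by (simp add: algebra_simps)
  hence D'b: "cmod D / 2 \<le> cmod (D - be - ga)" using bg t m by linarith
  have D': "D - be - ga \<noteq> 0" using D'b m by auto
  have n1: "cmod (al^2*D^2) \<le> t^2 * 4"
  proof -
    have "cmod (al^2*D^2) = (cmod al)^2 * (cmod D)^2" by (simp add: norm_mult norm_power)
    also have "\<dots> \<le> t^2 * 2^2"
      by (intro mult_mono power_mono) (use al D2 t in auto)
    finally show ?thesis by simp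
  qed
  have n2: "cmod (a^2*D*ga) \<le> t^2 * 2"
  proof -
    have "cmod (a^2*D*ga) = (cmod a)^2 * cmod D * cmod ga" by (simp add: norm_mult norm_power)
    also have "\<dots> \<le> 1^2 * 2 * t^2"
      by (intro mult_mono power_mono) (use a D2 ga t in auto)
    finally show ?thesis by simp
  qed
  have n3: "cmod (2*a*al*D*(be+ga)) \<le> t^2 * 12"
  proof -
    have "cmod (2*a*al*D*(be+ga)) = 2 * cmod a * cmod al * cmod D * cmod (be+ga)" by (simp add: norm_mult)
    also have "\<dots> \<le> 2 * 1 * t * 2 * (3*t)"
      by (intro mult_mono) (use a D2 al bg t in auto)
    finally show ?thesis by (simp add: power2_eq_square)
  qed
  have n4: "cmod (a^2*be*(be+ga)) \<le> t^2 * 6"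
  proof -
    have "cmod (a^2*be*(be+ga)) = (cmod a)^2 * cmod be * cmod (be+ga)" by (simp add: norm_mult norm_power)
    also have "\<dots> \<le> 1^2 * (2*t) * (3*t)"
      by (intro mult_mono power_mono) (use a be bg t in auto)
    finally show ?thesis by (simp add: power2_eq_square)
  qed
  have N: "cmod (al^2*D^2 + a^2*D*ga + 2*a*al*D*(be+ga) + a^2*be*(be+ga)) \<le> 24 * t^2"
  proof -
    have "cmod (al^2*D^2 + a^2*D*ga + 2*a*al*D*(be+ga) + a^2*be*(be+ga))
      \<le> cmod (al^2*D^2) + cmod (a^2*D*ga) + cmod (2*a*al*D*(be+ga)) + cmod (a^2*be*(be+ga))"
      by (intro order_trans[OF norm_triangle_ineq] add_mono order_refl)
    thus ?thesis using n1 n2 n3 n4 by linarith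
  qed
  have den: "m^3 / 2 \<le> cmod ((D-be-ga)*D^2)"
  proof -
    have "m^3/2 = (m/2) * m^2" by (simp add: power2_eq_square power3_eq_cube)
    also have "\<dots> \<le> cmod (D-be-ga) * (cmod D)^2"
      by (intro mult_mono power_mono) (use m D'b in auto)
    finally show ?thesis by (simp add: norm_mult norm_power)
  qed
  have "cmod ((a+al)^2/(D-be-ga) - a^2/D - 2*a*al/D - a^2*be/D^2)
      = cmod (al^2*D^2 + a^2*D*ga + 2*a*al*D*(be+ga) + a^2*be*(be+ga)) / cmod ((D-be-ga)*D^2)"
    by (simp add: core_ident[OF D D'] norm_divide)
  also have "\<dots> \<le> (24 * t^2) / (m^3/2)"
    by (rule frac_le) (use N den m in auto)
  also have "\<dots> = 48*t^2/m^3" by simp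
  finally show ?thesis .
qed

definition Ff :: "(nat \<Rightarrow> complex) \<Rightarrow> complex" where
  "Ff x = (x 0)\<^sup>2 / (1 - qf x)"

definition fB :: "(nat \<Rightarrow> complex) \<Rightarrow> complex" where
  "fB = restrB Ff"

lemma Bl2D: assumes "x \<in> Bl2" shows "x \<in> l2" "nrm2 x < 1"
proof -
  show x: "x \<in> l2" using assms by (simp add: Bl2_def)
  have u: "l2norm x < 1" using assms by (simp add: Bl2_def)
  have u0: "0 \<le> l2norm x" by (rule l2norm_nonneg[OF x])
  have "l2norm x * l2norm x \<le> l2norm x" using u u0 by (simp add: mult_left_le)
  hence "(l2norm x)\<^sup>2 < 1" using u by (simp add: power2_eq_square)
  thus "nrm2 x < 1" using l2norm_sq[OF x] by simp
qed

lemma D_bounds: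
  assumes x: "x \<in> l2" and n: "nrm2 x < 1"
  shows "1 - nrm2 x \<le> cmod (1 - qf x)" "cmod (1 - qf x) \<le> 2" "cmod (x 0) \<le> 1"
    "(cmod (x 0))\<^sup>2 < cmod (1 - qf x)"
proof -
  have q: "cmod (qf x) \<le> nrm2 x - (cmod (x 0))\<^sup>2" by (rule qf_bound[OF x])
  have c: "(cmod (x 0))\<^sup>2 \<le> nrm2 x" by (rule coord_le[OF x])
  have t1: "cmod 1 - cmod (qf x) \<le> cmod (1 - qf x)" by (rule norm_triangle_ineq2)
  have t2: "cmod (1 - qf x) \<le> cmod 1 + cmod (qf x)" by (rule norm_triangle_ineq4)
  have z: "0 \<le> (cmod (x 0))\<^sup>2" by simp
  have t1': "1 - cmod (qf x) \<le> cmod (1 - qf x)" using t1 by simp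
  have t2': "cmod (1 - qf x) \<le> 1 + cmod (qf x)" using t2 by simp
  show "1 - nrm2 x \<le> cmod (1 - qf x)" using q t1' z by linarith
  show "cmod (1 - qf x) \<le> 2" using q t2' z n by linarith
  show "(cmod (x 0))\<^sup>2 < cmod (1 - qf x)" using q t1' n by linarith
  have "(cmod (x 0))\<^sup>2 \<le> 1\<^sup>2" using c n by simp
  thus "cmod (x 0) \<le> 1" using abs_le_square_iff[of "cmod (x 0)" 1] by simp
qed

lemma fB_bound: "cmod (fB x) \<le> 1"
proof (cases "x \<in> Bl2")
  case True
  note B = Bl2D[OF True]
  have lt: "(cmod (x 0))\<^sup>2 < cmod (1 - qf x)" by (rule D_bounds(4)[OF B])
  have pos: "0 < cmod (1 - qf x)" using lt by (smt (verit) zero_le_power2)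
  have "cmod (fB x) = (cmod (x 0))\<^sup>2 / cmod (1 - qf x)"
    using True by (simp add: fB_def restrB_def Ff_def norm_divide norm_power)
  also have "\<dots> \<le> 1" using lt pos by simp
  finally show ?thesis .
next
  case False thus ?thesis by (simp add: fB_def restrB_def)
qed

lemma bf_add: assumes "x \<in> l2" "h1 \<in> l2" "h2 \<in> l2"
  shows "bf x (h1 + h2) = bf x h1 + bf x h2"
proof -
  have "bf x (h1 + h2) = (\<Sum>k. x (Suc k) * h1 (Suc k) + x (Suc k) * h2 (Suc k))"
    unfolding bf_def plus_fun_def by (simp add: distrib_left)
  also have "\<dots> = bf x h1 + bf x h2"
    unfolding bf_def by (rule suminf_add[symmetric]) (intro bf_summable assms)+
  finally show ?thesis .
qed

lemma bf_scale: assumes "x \<in> l2" "h \<in> l2"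
  shows "bf x (l2_scale c h) = c * bf x h"
proof -
  have "bf x (l2_scale c h) = (\<Sum>k. c * (x (Suc k) * h (Suc k)))"
    unfolding bf_def l2_scale_def by (simp add: algebra_simps)
  also have "\<dots> = c * bf x h"
    unfolding bf_def by (rule suminf_mult) (intro bf_summable assms)
  finally show ?thesis .
qed

lemma holo: "holomorphic_Bl2 fB"
  unfolding holomorphic_Bl2_def
proof
  fix x assume xB: "x \<in> Bl2"
  note B = Bl2D[OF xB]
  have x: "x \<in> l2" by (rule B(1))
  define a where "a = x 0"
  define D where "D = 1 - qf x"
  define m where "m = 1 - nrm2 x"
  have m: "m > 0" using B(2) m_def by simp
  have mD: "m \<le> cmod D" using D_bounds(1)[OF B] m_def D_def by simp
  have D2: "cmod D \<le> 2" using D_bounds(2)[OF B] D_def by simp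
  have a1: "cmod a \<le> 1" using D_bounds(3)[OF B] a_def by simp
  have n1: "nrm2 x \<le> 1" using B(2) by simp
  have Dnz: "D \<noteq> 0" using m mD by auto
  define Lf where "Lf = (\<lambda>h. 2*a*h 0/D + a^2*(2*bf x h)/D^2)"
  have Lbound: "cmod (Lf h) \<le> (2/m + 2/m^2) * l2norm h" if h: "h \<in> l2" for h
  proof -
    define t where "t = l2norm h"
    have t0: "0 \<le> t" using l2norm_nonneg[OF h] t_def by simp
    have h0: "cmod (h 0) \<le> t" using coord_le_norm[OF h] t_def by simp
    have bb: "cmod (bf x h) \<le> t" using bf_bound[OF x h n1] t_def by simp
    have e1: "cmod (2*a*h 0/D) \<le> 2*t/m"
    proof -
      have "cmod (2*a*h 0/D) = 2 * cmod a * cmod (h 0) / cmod D" by (simp add: norm_mult norm_divide)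
      also have "\<dots> \<le> 2 * 1 * t / m"
      proof -
        have "cmod a * cmod (h 0) \<le> 1 * t" by (rule mult_mono) (use a1 h0 t0 in auto)
        thus ?thesis by (intro frac_le) (use m mD t0 in auto)
      qed
      finally show ?thesis by simp
    qed
    have e2: "cmod (a^2*(2*bf x h)/D^2) \<le> 2*t/m^2"
    proof -
      have "cmod (a^2*(2*bf x h)/D^2) = (cmod a)^2 * (2 * cmod (bf x h)) / (cmod D)^2"
        by (simp add: norm_mult norm_divide norm_power)
      also have "\<dots> \<le> 1^2 * (2 * t) / m^2"
      proof -
        have p: "(cmod a)^2 \<le> 1^2" by (rule power_mono) (use a1 in auto)
        have "(cmod a)^2 * (2 * cmod (bf x h)) \<le> 1^2 * (2 * t)" by (rule mult_mono) (use p bb t0 in auto)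
        moreover have "m^2 \<le> (cmod D)^2" by (rule power_mono) (use mD m in auto)
        ultimately show ?thesis by (intro frac_le) (use m t0 in auto)
      qed
      finally show ?thesis by simp
    qed
    have "cmod (Lf h) \<le> cmod (2*a*h 0/D) + cmod (a^2*(2*bf x h)/D^2)"
      unfolding Lf_def by (rule norm_triangle_ineq)
    also have "\<dots> \<le> 2*t/m + 2*t/m^2" using e1 e2 by simp
    also have "\<dots> = (2/m + 2/m^2) * t" by (simp add: field_simps)
    finally show ?thesis unfolding t_def .
  qed
  have Ldual: "Lf \<in> l2_dual"
    unfolding l2_dual_def
  proof (intro CollectI conjI ballI allI)
    fix h1 h2 assume h1: "h1 \<in> l2" and h2: "h2 \<in> l2"
    show "Lf (h1 + h2) = Lf h1 + Lf h2"
      unfolding Lf_def bf_add[OF x h1 h2] by (simp add: plus_fun_def algebra_simps add_divide_distrib)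
  next
    fix c h assume h: "h \<in> l2"
    show "Lf (l2_scale c h) = c * Lf h"
      unfolding Lf_def bf_scale[OF x h] by (simp add: l2_scale_def algebra_simps)
  next
    show "\<exists>K. \<forall>x\<in>l2. cmod (Lf x) \<le> K * l2norm x" using Lbound by blast
  qed
  show "\<exists>L\<in>l2_dual. \<forall>\<epsilon>>0. \<exists>\<delta>>0. \<forall>h\<in>l2. l2norm h < \<delta> \<longrightarrow> x + h \<in> Bl2 \<longrightarrow>
          cmod (fB (x + h) - fB x - L h) \<le> \<epsilon> * l2norm h"
  proof (intro bexI[OF _ Ldual] allI impI)
    fix \<epsilon> :: real assume e: "\<epsilon> > 0"
    define \<delta> where "\<delta> = min 1 (min (m/8) (\<epsilon>*m^3/48))"
    have dpos: "\<delta> > 0" using e m by (simp add: \<delta>_def)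
    show "\<exists>\<delta>>0. \<forall>h\<in>l2. l2norm h < \<delta> \<longrightarrow> x + h \<in> Bl2 \<longrightarrow>
          cmod (fB (x + h) - fB x - Lf h) \<le> \<epsilon> * l2norm h"
    proof (intro exI[of _ \<delta>] conjI dpos ballI impI)
      fix h assume h: "h \<in> l2" and hd: "l2norm h < \<delta>" and xh: "x + h \<in> Bl2"
      define t where "t = l2norm h"
      have t0: "0 \<le> t" using l2norm_nonneg[OF h] t_def by simp
      have t1: "t \<le> 1" "t \<le> m/8" "t \<le> \<epsilon>*m^3/48" using hd t_def \<delta>_def by auto
      have al: "cmod (h 0) \<le> t" using coord_le_norm[OF h] t_def by simp
      have be: "cmod (2 * bf x h) \<le> 2*t" using bf_bound[OF x h n1] t_def by simp
      have ga: "cmod (qf h) \<le> t^2" using qf_bound2[OF h] t_def by simp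
      have xh_eq: "x + h = (\<lambda>n. x n + h n)" by (simp add: plus_fun_def)
      have fxh: "fB (x + h) = (a + h 0)^2 / (D - 2 * bf x h - qf h)"
      proof -
        have q: "qf (x + h) = qf x + 2 * bf x h + qf h" unfolding xh_eq by (rule qf_add[OF x h])
        have z: "(x + h) 0 = a + h 0" by (simp add: a_def)
        have "fB (x + h) = ((x + h) 0)^2 / (1 - qf (x + h))"
          using xh unfolding fB_def restrB_def Ff_def by simp
        also have "\<dots> = (a + h 0)^2 / (D - 2 * bf x h - qf h)" unfolding z q D_def by (simp add: algebra_simps)
        finally show ?thesis .
      qed
      have fx: "fB x = a^2 / D" using xB by (simp add: fB_def restrB_def Ff_def a_def D_def)
      have "cmod (fB (x + h) - fB x - Lf h)
          = cmod ((a+h 0)^2/(D-2 * bf x h-qf h) - a^2/D - 2*a*h 0/D - a^2*(2 * bf x h)/D^2)"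
        unfolding fxh fx Lf_def by (simp add: algebra_simps)
      also have "\<dots> \<le> 48*t^2/m^3"
        by (rule core[OF a1 m mD D2 al be ga t0 t1(1) t1(2)])
      also have "\<dots> \<le> \<epsilon> * t"
      proof -
        have "48*t/m^3 \<le> \<epsilon>" using t1(3) m by (simp add: pos_divide_le_eq field_simps)
        hence "t * (48*t/m^3) \<le> t * \<epsilon>" using t0 by (intro mult_left_mono)
        thus ?thesis by (simp add: power2_eq_square mult.commute)
      qed
      finally show "cmod (fB (x + h) - fB x - Lf h) \<le> \<epsilon> * l2norm h" unfolding t_def .
    qed
  qed
qed

lemma fB_Hinf: "fB \<in> Hinf"
proof -
  have "\<forall>x\<in>Bl2. cmod (fB x) \<le> 1" using fB_bound by simp
  moreover have "\<forall>x. x \<notin> Bl2 \<longrightarrow> fB x = 0" by (simp add: fB_def restrB_def)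
  ultimately show ?thesis unfolding Hinf_def using holo by blast
qed

definition ek :: "nat \<Rightarrow> nat \<Rightarrow> complex" where
  "ek k = (\<lambda>j. if j = k then 1 else 0)"

lemma ek_l2: "ek k \<in> l2" "nrm2 (ek k) = 1"
  using finsupp_l2[of "{k}" "ek k"] by (auto simp: ek_def)

lemma l2norm_ek: "l2norm (ek k) = 1"
  using ek_l2 unfolding l2norm_def nrm2_def by simp

definition av :: "nat \<Rightarrow> real" where "av n = 1 / (real n + 2)"
definition bv :: "nat \<Rightarrow> real" where "bv n = sqrt (1 - 2 * (av n)\<^sup>2)"

definition pt :: "nat \<Rightarrow> nat \<Rightarrow> complex" where
  "pt n = (\<lambda>j. if j = 0 then complex_of_real (av n) else if j = Suc n then complex_of_real (bv n) else 0)"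

lemma av_pos: "0 < av n" "av n \<le> 1/2"
  unfolding av_def by (auto simp: field_simps)

lemma bv_sq: "(bv n)\<^sup>2 = 1 - 2 * (av n)\<^sup>2"
proof -
  have "av n * av n \<le> (1/2) * (1/2)" using av_pos[of n] by (intro mult_mono) auto
  hence "0 \<le> 1 - 2 * (av n)\<^sup>2" by (simp add: power2_eq_square)
  thus ?thesis unfolding bv_def by simp
qed

lemma bv_bound: "\<bar>bv n\<bar> \<le> 1"
proof -
  have "(bv n)\<^sup>2 \<le> 1\<^sup>2" using bv_sq[of n] by simp
  thus ?thesis using abs_le_square_iff[of "bv n" 1] by simp
qed

lemma pt_Bl2: "pt n \<in> Bl2"
proof -
  have fs: "\<And>j. j \<notin> {0, Suc n} \<Longrightarrow> pt n j = 0" by (simp add: pt_def)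
  have l: "pt n \<in> l2" using finsupp_l2(1)[of "{0, Suc n}" "pt n"] fs by blast
  have "nrm2 (pt n) = (\<Sum>j\<in>{0, Suc n}. (cmod (pt n j))\<^sup>2)" using finsupp_l2(2)[of "{0, Suc n}" "pt n"] fs by blast
  also have "\<dots> = (av n)\<^sup>2 + (bv n)\<^sup>2" by (simp add: pt_def)
  also have "\<dots> = 1 - (av n)\<^sup>2" using bv_sq[of n] by simp
  finally have "nrm2 (pt n) < 1" using av_pos[of n] by simp
  hence "l2norm (pt n) < 1" unfolding l2norm_def nrm2_def[symmetric] by simp
  thus ?thesis using l by (simp add: Bl2_def)
qed

lemma fB_pt: "fB (pt n) = 1/2"
proof -
  have q: "qf (pt n) = complex_of_real ((bv n)\<^sup>2)"
  proof -
    have fs: "\<And>k. k \<notin> {n} \<Longrightarrow> (pt n (Suc k))\<^sup>2 = 0" by (simp add: pt_def)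
    have "qf (pt n) = (\<Sum>k\<in>{n}. (pt n (Suc k))\<^sup>2)" unfolding qf_def by (rule suminf_finite[OF _ fs]) simp
    thus ?thesis by (simp add: pt_def)
  qed
  have a: "av n \<noteq> 0" using av_pos[of n] by simp
  have "fB (pt n) = (complex_of_real (av n))\<^sup>2 / (1 - complex_of_real ((bv n)\<^sup>2))"
    using pt_Bl2[of n] by (simp add: fB_def restrB_def Ff_def q) (simp add: pt_def)
  also have "\<dots> = (complex_of_real (av n))\<^sup>2 / (2 * (complex_of_real (av n))\<^sup>2)"
    unfolding bv_sq by simp
  also have "\<dots> = 1/2" using a by (simp add: field_simps)
  finally show ?thesis .
qed

lemma bessel:
  assumes L: "L \<in> l2_dual"
  shows "(\<lambda>k. L (ek k)) \<longlonglongrightarrow> 0"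
proof -
  define c where "c k = L (ek k)" for k
  obtain K where K: "\<And>x. x \<in> l2 \<Longrightarrow> cmod (L x) \<le> K * l2norm x" using L unfolding l2_dual_def by blast
  have add: "\<And>x y. x \<in> l2 \<Longrightarrow> y \<in> l2 \<Longrightarrow> L (x + y) = L x + L y" using L unfolding l2_dual_def by blast
  have sc: "\<And>a x. x \<in> l2 \<Longrightarrow> L (l2_scale a x) = a * L x" using L unfolding l2_dual_def by blast
  define y where "y N = (\<lambda>j. if j < N then cnj (c j) else 0)" for N
  have yfs: "\<And>j. j \<notin> {..<N} \<Longrightarrow> y N j = 0" for N by (simp add: y_def)
  have yl2: "y N \<in> l2" for N using finsupp_l2(1)[of "{..<N}" "y N"] yfs by blast
  have Ly: "L (y N) = (\<Sum>k<N. cnj (c k) * c k)" for N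
  proof (induction N)
    case 0
    have "y 0 = l2_scale 0 (ek 0)" by (simp add: y_def l2_scale_def fun_eq_iff)
    thus ?case using sc[OF ek_l2(1), of 0 0] by simp
  next
    case (Suc N)
    have "y (Suc N) = y N + l2_scale (cnj (c N)) (ek N)"
      by (auto simp add: y_def l2_scale_def ek_def fun_eq_iff less_Suc_eq)
    hence "L (y (Suc N)) = L (y N) + cnj (c N) * L (ek N)"
      using add[OF yl2 l2_scale_in[OF ek_l2(1)]] sc[OF ek_l2(1)] by simp
    thus ?case using Suc by (simp add: c_def)
  qed
  define s where "s N = (\<Sum>k<N. (cmod (c k))\<^sup>2)" for N
  have s0: "0 \<le> s N" for N by (simp add: s_def sum_nonneg)
  have ns: "nrm2 (y N) = s N" for N
    using finsupp_l2(2)[of "{..<N}" "y N"] yfs by (simp add: s_def y_def)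
  have sb: "s N \<le> K\<^sup>2" for N
  proof -
    have "(\<Sum>k<N. cnj (c k) * c k) = complex_of_real (s N)"
    proof -
      have "cnj (c k) * c k = complex_of_real ((cmod (c k))\<^sup>2)" for k
        using complex_norm_square[of "c k"] by (simp only: mult.commute)
      thus ?thesis unfolding s_def of_real_sum by simp
    qed
    hence "s N \<le> K * sqrt (s N)"
      using K[OF yl2[of N]] Ly[of N] ns[of N] s0[of N] unfolding l2norm_def nrm2_def[symmetric] by simp
    show ?thesis
    proof (cases "s N = 0")
      case True thus ?thesis by simp
    next
      case False
      hence p: "0 < sqrt (s N)" using s0[of N] by simp
      have "sqrt (s N) * sqrt (s N) \<le> K * sqrt (s N)" using \<open>s N \<le> K * sqrt (s N)\<close> s0[of N] by simp
      hence "sqrt (s N) \<le> K" by (rule mult_right_le_imp_le[OF _ p])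
      hence "(sqrt (s N))\<^sup>2 \<le> K\<^sup>2" using p by (intro power_mono) auto
      thus ?thesis using s0[of N] by simp
    qed
  qed
  have "summable (\<lambda>k. (cmod (c k))\<^sup>2)"
    by (rule summableI_nonneg_bounded[where x="K\<^sup>2"]) (use sb in \<open>auto simp: s_def\<close>)
  hence "(\<lambda>k. (cmod (c k))\<^sup>2) \<longlonglongrightarrow> 0" by (rule summable_LIMSEQ_zero)
  hence "(\<lambda>k. sqrt ((cmod (c k))\<^sup>2)) \<longlonglongrightarrow> sqrt 0" by (rule tendsto_real_sqrt)
  hence "(\<lambda>k. norm (c k)) \<longlonglongrightarrow> 0" by simp
  hence "c \<longlonglongrightarrow> 0" by (simp add: tendsto_norm_zero_iff)
  thus ?thesis unfolding c_def .
qed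

lemma L_pt:
  assumes L: "L \<in> l2_dual"
  shows "(\<lambda>n. L (pt n)) \<longlonglongrightarrow> 0"
proof -
  have add: "\<And>x y. x \<in> l2 \<Longrightarrow> y \<in> l2 \<Longrightarrow> L (x + y) = L x + L y" using L unfolding l2_dual_def by blast
  have sc: "\<And>a x. x \<in> l2 \<Longrightarrow> L (l2_scale a x) = a * L x" using L unfolding l2_dual_def by blast
  have eq: "pt n = l2_scale (av n) (ek 0) + l2_scale (bv n) (ek (Suc n))" for n
    by (simp add: pt_def l2_scale_def ek_def fun_eq_iff)
  have Lp: "L (pt n) = av n * L (ek 0) + bv n * L (ek (Suc n))" for n
    unfolding eq using add[OF l2_scale_in[OF ek_l2(1)] l2_scale_in[OF ek_l2(1)]] sc[OF ek_l2(1)] by simp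
  have a0: "(\<lambda>n. complex_of_real (av n)) \<longlonglongrightarrow> 0"
  proof -
    have "(\<lambda>n. 1 / (real n + 2)) \<longlonglongrightarrow> 0"
    proof -
      have "(\<lambda>n. 1 / real (n + 2)) \<longlonglongrightarrow> 0"
        using LIMSEQ_ignore_initial_segment[OF lim_const_over_n[of 1], of 2] by simp
      thus ?thesis by (simp add: add.commute)
    qed
    hence "(\<lambda>n. av n) \<longlonglongrightarrow> 0" by (simp add: av_def[abs_def])
    thus ?thesis using tendsto_of_real by fastforce
  qed
  have t1: "(\<lambda>n. av n * L (ek 0)) \<longlonglongrightarrow> 0"
    using tendsto_mult[OF a0 tendsto_const[of "L (ek 0)"]] by simp
  have e: "(\<lambda>n. L (ek (Suc n))) \<longlonglongrightarrow> 0" using LIMSEQ_Suc[OF bessel[OF L]] .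
  have t2: "(\<lambda>n. bv n * L (ek (Suc n))) \<longlonglongrightarrow> 0"
  proof (rule Lim_null_comparison[OF _ tendsto_norm_zero[OF e]])
    show "\<forall>\<^sub>F n in sequentially. norm (complex_of_real (bv n) * L (ek (Suc n))) \<le> norm (L (ek (Suc n)))"
      using bv_bound by (auto simp: norm_mult intro!: always_eventually mult_left_le_one_le)
  qed
  show ?thesis unfolding Lp using tendsto_add[OF t1 t2] by simp
qed

definition Sop :: "(nat \<Rightarrow> complex) \<Rightarrow> (nat \<Rightarrow> complex)" where
  "Sop x = (\<lambda>j. if j = 0 then x 0 else 0)"

lemma P_eq: "x - Sop x = (\<lambda>j. if j = 0 then 0 else x j)"
  by (simp add: Sop_def fun_eq_iff)

lemma Sop_l2: "Sop x \<in> l2" "nrm2 (Sop x) = (cmod (x 0))\<^sup>2"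
  using finsupp_l2[of "{0}" "Sop x"] by (auto simp: Sop_def)

lemma Sop_fr: "finite_rank_l2 Sop"
proof -
  have b1: "\<forall>x\<in>l2. Sop x \<in> l2" using Sop_l2(1) by blast
  have b2: "\<forall>x\<in>l2. \<forall>y\<in>l2. Sop (x + y) = Sop x + Sop y" by (simp add: Sop_def fun_eq_iff)
  have b3: "\<forall>c. \<forall>x\<in>l2. Sop (l2_scale c x) = l2_scale c (Sop x)" by (simp add: Sop_def l2_scale_def fun_eq_iff)
  have bk: "l2norm (Sop x) \<le> 1 * l2norm x" if x: "x \<in> l2" for x
  proof -
    have "l2norm (Sop x) = sqrt ((cmod (x 0))\<^sup>2)" using Sop_l2(2)[of x] unfolding l2norm_def nrm2_def by simp
    also have "\<dots> = cmod (x 0)" by simp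
    also have "\<dots> \<le> l2norm x" by (rule coord_le_norm[OF x])
    finally show ?thesis by simp
  qed
  have b4: "\<exists>K. \<forall>x\<in>l2. l2norm (Sop x) \<le> K * l2norm x" using bk by blast
  have r1: "\<forall>i<1. (\<lambda>i::nat. ek 0) i \<in> l2" using ek_l2 by simp
  have r2: "\<forall>x\<in>l2. \<exists>c. Sop x = (\<Sum>i<1. l2_scale (c i) ((\<lambda>i::nat. ek 0) i))"
  proof
    fix x :: "nat \<Rightarrow> complex"
    have "Sop x = (\<Sum>i<1. l2_scale ((\<lambda>i::nat. x 0) i) ((\<lambda>i::nat. ek 0) i))"
      by (simp add: Sop_def l2_scale_def ek_def fun_eq_iff)
    thus "\<exists>c. Sop x = (\<Sum>i<1. l2_scale (c i) ((\<lambda>i::nat. ek 0) i))" by (rule exI[of _ "\<lambda>i. x 0"])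
  qed
  have r: "\<exists>n::nat. \<exists>v. (\<forall>i<n. v i \<in> l2) \<and> (\<forall>x\<in>l2. \<exists>c. Sop x = (\<Sum>i<n. l2_scale (c i) (v i)))"
    by (rule exI[of _ "1::nat"], rule exI[of _ "\<lambda>i::nat. ek 0"], rule conjI[OF r1 r2])
  show ?thesis unfolding finite_rank_l2_def bounded_op_l2_def
    by (intro conjI b1 b2 b3 b4 r)
qed

lemma opnorm_P: "opnorm_l2 (\<lambda>x. x - Sop x) = 1"
  unfolding opnorm_l2_def
proof (rule cSup_eq_maximum)
  have "ek 1 - Sop (ek 1) = ek 1" by (simp add: P_eq ek_def fun_eq_iff)
  thus "1 \<in> {l2norm (x - Sop x) |x. x \<in> l2 \<and> l2norm x \<le> 1}"
    using ek_l2(1)[of 1] l2norm_ek[of 1] by (intro CollectI exI[of _ "ek 1"]) simp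
next
  fix r assume "r \<in> {l2norm (x - Sop x) |x. x \<in> l2 \<and> l2norm x \<le> 1}"
  then obtain x where x: "x \<in> l2" "l2norm x \<le> 1" and r: "r = l2norm (x - Sop x)" by blast
  have s1: "summable (\<lambda>n. (cmod (x n))\<^sup>2)" by (rule l2D[OF x(1)])
  have le: "(cmod ((x - Sop x) n))\<^sup>2 \<le> (cmod (x n))\<^sup>2" for n by (simp add: P_eq)
  have s2: "summable (\<lambda>n. (cmod ((x - Sop x) n))\<^sup>2)"
    by (rule summable_comparison_test[OF _ s1]) (use le in auto)
  have "(\<Sum>n. (cmod ((x - Sop x) n))\<^sup>2) \<le> (\<Sum>n. (cmod (x n))\<^sup>2)" by (rule suminf_le[OF le s2 s1])
  hence "l2norm (x - Sop x) \<le> l2norm x" unfolding l2norm_def by (rule real_sqrt_le_mono)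
  thus "r \<le> 1" using r x(2) by simp
qed

lemma restr_P: "restrB (\<lambda>x. fB (x - Sop x)) = (\<lambda>x. 0)"
  by (simp add: fun_eq_iff restrB_def fB_def Ff_def P_eq)

theorem mainTheorem3:
  shows "\<exists>S \<phi> f. finite_rank_l2 S \<and> opnorm_l2 (\<lambda>x. x - S x) = 1
          \<and> \<phi> \<in> fiber0 \<and> f \<in> Hinf
          \<and> \<phi> f \<noteq> \<phi> (restrB (\<lambda>x. f (x - S x)))"
proof -
  obtain U where U: "U \<le> sequentially" "ultra U" using ex_ultra[of sequentially] by auto
  have Unb: "U \<noteq> bot" using U(2) by (simp add: ultra_def)
  define \<phi> where "\<phi> g = Lim U (\<lambda>n. g (pt n))" for g :: "(nat \<Rightarrow> complex) \<Rightarrow> complex"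
  have lim: "((\<lambda>n. g (pt n)) \<longlongrightarrow> \<phi> g) U" if g: "g \<in> Hinf" for g
  proof -
    obtain M where M: "\<forall>x\<in>Bl2. cmod (g x) \<le> M" using g unfolding Hinf_def by blast
    obtain l where l: "((\<lambda>n. g (pt n)) \<longlongrightarrow> l) U"
      using ultra_lim[OF U(2), of "\<lambda>n. g (pt n)" M] M pt_Bl2 by blast
    have "\<phi> g = l" unfolding \<phi>_def by (rule tendsto_Lim[OF Unb l])
    thus ?thesis using l by simp
  qed
  have phiI: "\<phi> g = l" if "((\<lambda>n. g (pt n)) \<longlongrightarrow> l) U" for g l
    unfolding \<phi>_def by (rule tendsto_Lim[OF Unb that])
  have phf: "\<phi> fB = 1/2" by (rule phiI) (simp add: fB_pt)
  have ph0: "\<phi> (\<lambda>x. 0) = 0" by (rule phiI) simp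
  have spec: "\<phi> \<in> Hinf_spectrum"
    unfolding Hinf_spectrum_def
  proof (intro CollectI conjI ballI allI)
    fix f g assume f: "f \<in> Hinf" and g: "g \<in> Hinf"
    show "\<phi> (\<lambda>x. f x + g x) = \<phi> f + \<phi> g" by (rule phiI) (intro tendsto_add lim f g)
    show "\<phi> (\<lambda>x. f x * g x) = \<phi> f * \<phi> g" by (rule phiI) (intro tendsto_mult lim f g)
  next
    fix c f assume f: "f \<in> Hinf"
    show "\<phi> (\<lambda>x. c * f x) = c * \<phi> f" by (rule phiI) (intro tendsto_mult tendsto_const lim f)
  next
    show "\<exists>f\<in>Hinf. \<phi> f \<noteq> 0" using fB_Hinf phf by (intro bexI[of _ fB]) auto
  qed
  have fib: "\<phi> \<in> fiber0"
    unfolding fiber0_def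
  proof (intro CollectI conjI spec ballI)
    fix L assume L: "L \<in> l2_dual"
    have "((\<lambda>n. restrB L (pt n)) \<longlongrightarrow> 0) sequentially"
      using L_pt[OF L] pt_Bl2 by (simp add: restrB_def)
    hence "((\<lambda>n. restrB L (pt n)) \<longlongrightarrow> 0) U" by (rule tendsto_mono[OF U(1)])
    thus "\<phi> (restrB L) = 0" by (rule phiI)
  qed
  show ?thesis
  proof (intro exI conjI)
    show "finite_rank_l2 Sop" by (rule Sop_fr)
    show "opnorm_l2 (\<lambda>x. x - Sop x) = 1" by (rule opnorm_P)
    show "\<phi> \<in> fiber0" by (rule fib)
    show "fB \<in> Hinf" by (rule fB_Hinf)
    show "\<phi> fB \<noteq> \<phi> (restrB (\<lambda>x. fB (x - Sop x)))" unfolding restr_P phf ph0 by simp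
  qed
qed

end
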